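(* Let $\Sigma=\mathbb{Z}_6$ and for $n\in\Sigma$ let $n':=\{n+2,n+3,n+4\}$ (mod 6). Define $n\perp m\iff n\in m'$ and, for $A\subseteq\Sigma$, $A^\perp:=\{m\in\Sigma;\ m\perp a\ \forall a\in A\}$; let $\mathcal{L}:=\{A\subseteq\Sigma; A^{\perp\perp}=A\}$ ordered by inclusion. Then $\perp$ is symmetric, anti-reflexive and separating, $\mathcal{L}$ is an irreducible complete atomistic orthocomplemented lattice (a simple closure space on $\Sigma$) which does not satisfy $\Sigma[x]\cup\Sigma[y]\ne\Sigma$ for all coatoms $x,y$ (e.g. $0'\cup3'=\Sigma$). Moreover, with $R:=(\{0,1,2\}\times\{0,1,2\})\cup(\{3,4,5\}\times\{3,4,5\})$ and $S:=(4'\times\Sigma)\cup(\Sigma\times1')$, one has $R,S\in\Sigma'_\circledast$ (for $\mathcal{L}_1=\mathcal{L}_2=\mathcal{L}$) and $R\subsetneqq S\subsetneqq\Sigma\times\Sigma$; consequently there is no complete atomistic coatomistic lattice $\mathcal{L}_0$ with $\mathcal{F}(\mathcal{L}_0)\cong\mathcal{F}(\mathcal{L})\otimes_C\mathcal{F}(\mathcal{L})$.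
   Context: A relation $\perp$ on $\Sigma$ is separating if for any $p\neq q$ there is $r$ with $p\perp r$ and $q\not\perp r$. For a complete lattice: $\Sigma,\Sigma'$ atoms and coatoms, $\Sigma[a]$ atoms below $a$, $\mathsf{Cl}(\omega)=\{\Sigma[a];a\in\omega\}$. $\Sigma'_\circledast$ is the set of $R\subsetneqq\Sigma_1\times\Sigma_2$ such that for every $(p_1,p_2)$, $\{q_1;(q_1,p_2)\in R\}\in\mathsf{Cl}(\Sigma_1'\cup\{1\})$ and $\{q_2;(p_1,q_2)\in R\}\in\mathsf{Cl}(\Sigma_2'\cup\{1\})$. $\mathbf{Chu}_{2_0}$: objects $(A,r,X)$ with $A,X$ pointed sets and $r:A\times X\to\{0,1\}$ vanishing at base points; arrows $(f,g)$ with pointed $f:A\to B$, $g:Y\to X$ and $s(f(a),y)=r(a,g(y))$; $(A,r,X)^\perp=(X,\check r,A)$; $\mathsf{A}_1\otimes_C\mathsf{A}_2=(A_1\wedge A_2,t,\mathbf{Chu}_{2_0}(\mathsf{A}_1,\mathsf{A}_2^\perp))$ with smash product $A\wedge B=((A\setminus\{0\})\times(B\setminus\{0\}))\cup\{0_\sharp\}$, hom-set pointed by the constant arrow, $t((a_1,a_2),(f,g))=r_1(a_1,g(a_2))$. $\mathcal{F}(\mathcal{L})=(\Sigma\cup\{0\},r,\Sigma'\cup\{1\})$ pointed by $0$ and $1$, $r(p,x)=0\iff p\le x$. *)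

theory Defs
  imports "HOL-Algebra.Complete_Lattice" "HOL-Library.Numeral_Type" "HOL-Library.FuncSet"
begin

definition atoms :: "('a, 'b) gorder_scheme \<Rightarrow> 'a set" where
  "atoms L = {p \<in> carrier L. p \<noteq> \<bottom>\<^bsub>L\<^esub> \<and>
      (\<forall>b\<in>carrier L. b \<sqsubseteq>\<^bsub>L\<^esub> p \<longrightarrow> b = \<bottom>\<^bsub>L\<^esub> \<or> b = p)}"

definition coatoms :: "('a, 'b) gorder_scheme \<Rightarrow> 'a set" where
  "coatoms L = {x \<in> carrier L. x \<noteq> \<top>\<^bsub>L\<^esub> \<and>
      (\<forall>b\<in>carrier L. x \<sqsubseteq>\<^bsub>L\<^esub> b \<longrightarrow> b = \<top>\<^bsub>L\<^esub> \<or> b = x)}"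

definition atoms_below :: "('a, 'b) gorder_scheme \<Rightarrow> 'a \<Rightarrow> 'a set" where
  "atoms_below L a = {p \<in> atoms L. p \<sqsubseteq>\<^bsub>L\<^esub> a}"

definition Cl :: "('a, 'b) gorder_scheme \<Rightarrow> 'a set \<Rightarrow> 'a set set" where
  "Cl L \<omega> = atoms_below L ` \<omega>"

definition atomistic :: "('a, 'b) gorder_scheme \<Rightarrow> bool" where
  "atomistic L \<longleftrightarrow> (\<forall>a\<in>carrier L. a = \<Squnion>\<^bsub>L\<^esub> (atoms_below L a))"

definition coatomistic :: "('a, 'b) gorder_scheme \<Rightarrow> bool" where
  "coatomistic L \<longleftrightarrow>
     (\<forall>a\<in>carrier L. a = \<Sqinter>\<^bsub>L\<^esub> {x \<in> coatoms L. a \<sqsubseteq>\<^bsub>L\<^esub> x})"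

definition orthocomplemented :: "('a, 'b) gorder_scheme \<Rightarrow> bool" where
  "orthocomplemented L \<longleftrightarrow> (\<exists>c. (\<forall>a\<in>carrier L. c a \<in> carrier L) \<and>
      (\<forall>a\<in>carrier L. c (c a) = a) \<and>
      (\<forall>a\<in>carrier L. \<forall>b\<in>carrier L. a \<sqsubseteq>\<^bsub>L\<^esub> b \<longrightarrow> c b \<sqsubseteq>\<^bsub>L\<^esub> c a) \<and>
      (\<forall>a\<in>carrier L. a \<sqinter>\<^bsub>L\<^esub> c a = \<bottom>\<^bsub>L\<^esub> \<and> a \<squnion>\<^bsub>L\<^esub> c a = \<top>\<^bsub>L\<^esub>))"

text \<open>Direct products and order isomorphisms, used to define irreducibility
  (a lattice is irreducible iff it is not isomorphic to a direct product of two
  non-trivial lattices).\<close>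

definition prod_gorder :: "('b, 'e) gorder_scheme \<Rightarrow> ('c, 'f) gorder_scheme \<Rightarrow> ('b \<times> 'c) gorder" where
  "prod_gorder L1 L2 = \<lparr>carrier = carrier L1 \<times> carrier L2, eq = (=),
     le = (\<lambda>(a1, a2) (b1, b2). a1 \<sqsubseteq>\<^bsub>L1\<^esub> b1 \<and> a2 \<sqsubseteq>\<^bsub>L2\<^esub> b2)\<rparr>"

definition order_iso :: "('a, 'e) gorder_scheme \<Rightarrow> ('b, 'f) gorder_scheme \<Rightarrow> ('a \<Rightarrow> 'b) \<Rightarrow> bool" where
  "order_iso L M f \<longleftrightarrow> bij_betw f (carrier L) (carrier M) \<and>
     (\<forall>x\<in>carrier L. \<forall>y\<in>carrier L. x \<sqsubseteq>\<^bsub>L\<^esub> y \<longleftrightarrow> f x \<sqsubseteq>\<^bsub>M\<^esub> f y)"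

definition nontrivial_lattice :: "('a, 'e) gorder_scheme \<Rightarrow> bool" where
  "nontrivial_lattice M \<longleftrightarrow> lattice M \<and> (\<exists>x\<in>carrier M. \<exists>y\<in>carrier M. x \<noteq> y)"

definition decomposes_as :: "('a, 'e) gorder_scheme \<Rightarrow> 'b gorder \<Rightarrow> 'c gorder \<Rightarrow> bool" where
  "decomposes_as L L1 L2 \<longleftrightarrow> nontrivial_lattice L1 \<and> nontrivial_lattice L2 \<and>
     (\<exists>f. order_iso L (prod_gorder L1 L2) f)"

definition sigma_circledast :: "('a, 'e) gorder_scheme \<Rightarrow> ('b, 'f) gorder_scheme \<Rightarrow> ('a \<times> 'b) set set" where
  "sigma_circledast L1 L2 = {R. R \<subset> atoms L1 \<times> atoms L2 \<and>
     (\<forall>p1\<in>atoms L1. \<forall>p2\<in>atoms L2.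
        {q1. (q1, p2) \<in> R} \<in> Cl L1 (coatoms L1 \<union> {\<top>\<^bsub>L1\<^esub>}) \<and>
        {q2. (p1, q2) \<in> R} \<in> Cl L2 (coatoms L2 \<union> {\<top>\<^bsub>L2\<^esub>}))}"

text \<open>An object (A, r, X): A pointed by pt0, X pointed by st0, r valued in bool (True = 1).\<close>
record ('a, 'x) chu =
  pts :: "'a set"
  pt0 :: 'a
  states :: "'x set"
  st0 :: 'x
  rel :: "'a \<Rightarrow> 'x \<Rightarrow> bool"

definition chu_obj :: "('a, 'x) chu \<Rightarrow> bool" where
  "chu_obj A \<longleftrightarrow> pt0 A \<in> pts A \<and> st0 A \<in> states A \<and>
     (\<forall>x\<in>states A. \<not> rel A (pt0 A) x) \<and> (\<forall>a\<in>pts A. \<not> rel A a (st0 A))"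

definition chu_arrow :: "('a, 'x) chu \<Rightarrow> ('b, 'y) chu \<Rightarrow> ('a \<Rightarrow> 'b) \<times> ('y \<Rightarrow> 'x) \<Rightarrow> bool" where
  "chu_arrow A B fg \<longleftrightarrow> (case fg of (f, g) \<Rightarrow>
     f \<in> pts A \<rightarrow>\<^sub>E pts B \<and> f (pt0 A) = pt0 B \<and>
     g \<in> states B \<rightarrow>\<^sub>E states A \<and> g (st0 B) = st0 A \<and>
     (\<forall>a\<in>pts A. \<forall>y\<in>states B. rel B (f a) y = rel A a (g y)))"

definition chu_iso :: "('a, 'x) chu \<Rightarrow> ('b, 'y) chu \<Rightarrow> bool" where
  "chu_iso A B \<longleftrightarrow> (\<exists>f g f' g'. chu_arrow A B (f, g) \<and> chu_arrow B A (f', g') \<and>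
     (\<forall>a\<in>pts A. f' (f a) = a) \<and> (\<forall>b\<in>pts B. f (f' b) = b) \<and>
     (\<forall>x\<in>states A. g (g' x) = x) \<and> (\<forall>y\<in>states B. g' (g y) = y))"

definition chu_perp :: "('a, 'x) chu \<Rightarrow> ('x, 'a) chu" where
  "chu_perp A = \<lparr>pts = states A, pt0 = st0 A, states = pts A, st0 = pt0 A,
     rel = (\<lambda>x a. rel A a x)\<rparr>"

text \<open>Smash product: None is the base point 0_sharp.\<close>
definition smash :: "'a set \<Rightarrow> 'a \<Rightarrow> 'b set \<Rightarrow> 'b \<Rightarrow> ('a \<times> 'b) option set" where
  "smash A a0 B b0 = Some ` ((A - {a0}) \<times> (B - {b0})) \<union> {None}"

definition chu_tensor :: "('a1, 'x1) chu \<Rightarrow> ('a2, 'x2) chu \<Rightarrow>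
    (('a1 \<times> 'a2) option, ('a1 \<Rightarrow> 'x2) \<times> ('a2 \<Rightarrow> 'x1)) chu" where
  "chu_tensor A1 A2 = \<lparr>pts = smash (pts A1) (pt0 A1) (pts A2) (pt0 A2), pt0 = None,
     states = {fg. chu_arrow A1 (chu_perp A2) fg},
     st0 = (\<lambda>a\<in>pts A1. st0 A2, \<lambda>a\<in>pts A2. st0 A1),
     rel = (\<lambda>p fg. case p of None \<Rightarrow> False | Some (a1, a2) \<Rightarrow> rel A1 a1 (snd fg a2))\<rparr>"

definition chu_F :: "('a, 'e) gorder_scheme \<Rightarrow> ('a, 'a) chu" where
  "chu_F L = \<lparr>pts = atoms L \<union> {\<bottom>\<^bsub>L\<^esub>}, pt0 = \<bottom>\<^bsub>L\<^esub>,
     states = coatoms L \<union> {\<top>\<^bsub>L\<^esub>}, st0 = \<top>\<^bsub>L\<^esub>,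
     rel = (\<lambda>p x. \<not> p \<sqsubseteq>\<^bsub>L\<^esub> x)\<rparr>"

definition primeZ6 :: "6 \<Rightarrow> 6 set" where
  "primeZ6 n = {n + 2, n + 3, n + 4}"

definition orthZ6 :: "6 \<Rightarrow> 6 \<Rightarrow> bool" where
  "orthZ6 n m \<longleftrightarrow> n \<in> primeZ6 m"

definition perpZ6 :: "6 set \<Rightarrow> 6 set" where
  "perpZ6 A = {m. \<forall>a\<in>A. orthZ6 m a}"

definition LZ6 :: "6 set gorder" where
  "LZ6 = \<lparr>carrier = {A. perpZ6 (perpZ6 A) = A}, eq = (=), le = (\<subseteq>)\<rparr>"

definition separating :: "'a set \<Rightarrow> ('a \<Rightarrow> 'a \<Rightarrow> bool) \<Rightarrow> bool" where
  "separating S r \<longleftrightarrow> (\<forall>p\<in>S. \<forall>q\<in>S. p \<noteq> q \<longrightarrow> (\<exists>s\<in>S. r p s \<and> \<not> r q s))"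

definition simple_closure_space :: "'a set \<Rightarrow> ('a set \<Rightarrow> 'a set) \<Rightarrow> bool" where
  "simple_closure_space S cl \<longleftrightarrow>
     (\<forall>A. A \<subseteq> S \<longrightarrow> A \<subseteq> cl A \<and> cl A \<subseteq> S \<and> cl (cl A) = cl A) \<and>
     (\<forall>A B. A \<subseteq> B \<and> B \<subseteq> S \<longrightarrow> cl A \<subseteq> cl B) \<and>
     cl {} = {} \<and> (\<forall>p\<in>S. cl {p} = {p})"

definition RZ6 :: "(6 \<times> 6) set" where
  "RZ6 = ({0, 1, 2} \<times> {0, 1, 2}) \<union> ({3, 4, 5} \<times> {3, 4, 5})"

definition SZ6 :: "(6 \<times> 6) set" where
  "SZ6 = (primeZ6 4 \<times> UNIV) \<union> (UNIV \<times> primeZ6 1)"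

text \<open>Points of Z_6 identified with the atoms {p} of LZ6.\<close>
definition atom_pairs :: "(6 \<times> 6) set \<Rightarrow> (6 set \<times> 6 set) set" where
  "atom_pairs R = (\<lambda>(p, q). ({p}, {q})) ` R"

end

theory Submission
  imports Defs
begin
lemma x6: "(x::6) = 0 \<or> x = 1 \<or> x = 2 \<or> x = 3 \<or> x = 4 \<or> x = 5"
proof (cases x)
  case (of_int z)
  then have "z = 0 \<or> z = 1 \<or> z = 2 \<or> z = 3 \<or> z = 4 \<or> z = 5" by auto
  then show ?thesis using of_int by auto
qed
lemma UNIV6: "(UNIV::6 set) = {0,1,2,3,4,5}" using x6 by auto
lemma all6: "(\<forall>n::6. P n) \<longleftrightarrow> P 0 \<and> P 1 \<and> P 2 \<and> P 3 \<and> P 4 \<and> P 5"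
  by (metis x6)
lemma ex6: "(\<exists>n::6. P n) \<longleftrightarrow> P 0 \<or> P 1 \<or> P 2 \<or> P 3 \<or> P 4 \<or> P 5"
  by (metis x6)
lemma orth_sym: "orthZ6 n m \<Longrightarrow> orthZ6 m n"
  using x6[of n] x6[of m] by (auto simp: orthZ6_def primeZ6_def)
lemma orth_irr: "\<not> orthZ6 n n"
  using x6[of n] by (auto simp: orthZ6_def primeZ6_def)
lemma separating: "separating UNIV orthZ6"
  unfolding separating_def orthZ6_def primeZ6_def ball_UNIV bex_UNIV all6 ex6 by simp

abbreviation pp where "pp A \<equiv> perpZ6 (perpZ6 A)"

lemma perp_single: "perpZ6 {n} = primeZ6 n" by (auto simp: perpZ6_def orthZ6_def)
lemma perp_prime_aux: "\<forall>n m. (m \<in> perpZ6 (primeZ6 n)) = (m = n)"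
  unfolding perpZ6_def orthZ6_def primeZ6_def all6 by simp
lemma perp_prime: "perpZ6 (primeZ6 n) = {n}"
  using perp_prime_aux by auto
lemma perp_UNIV: "perpZ6 UNIV = {}" using orth_irr by (auto simp: perpZ6_def)
lemma perp_empty: "perpZ6 {} = UNIV" by (auto simp: perpZ6_def)
lemma prime_inj_aux: "\<forall>n m. primeZ6 n \<subseteq> primeZ6 m \<longrightarrow> n = m"
  unfolding primeZ6_def all6 by simp
lemma prime_inj: "primeZ6 n \<subseteq> primeZ6 m \<Longrightarrow> n = m"
  using prime_inj_aux by blast
lemma pp_single: "pp {n} = {n}" by (simp add: perp_single perp_prime)
lemma perp_anti: "A \<subseteq> B \<Longrightarrow> perpZ6 B \<subseteq> perpZ6 A" by (auto simp: perpZ6_def)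
lemma perp_ext: "A \<subseteq> pp A" unfolding perpZ6_def by (blast intro: orth_sym)
lemma perp3: "perpZ6 (pp A) = perpZ6 A"
  by (meson perp_anti perp_ext subset_antisym)

lemma LZ6_simps[simp]: "carrier LZ6 = {A. pp A = A}" "le LZ6 = (\<subseteq>)" "eq LZ6 = (=)"
  by (auto simp: LZ6_def)

lemma LZ6_po: "partial_order LZ6"
  by unfold_locales auto

lemma least_LZ6_sup: assumes "F \<subseteq> carrier LZ6" shows "least LZ6 (pp (\<Union>F)) (Upper LZ6 F)"
proof -
  have c: "pp (\<Union>F) \<in> carrier LZ6" by (simp add: perp3)
  have u: "X \<subseteq> pp (\<Union>F)" if "X \<in> F" for X
    using that perp_ext by blast
  have l: "pp (\<Union>F) \<subseteq> Y" if "Y \<in> carrier LZ6" "\<forall>X\<in>F. X \<subseteq> Y" for Y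
  proof -
    have "\<Union>F \<subseteq> Y" using that by blast
    then have "pp (\<Union>F) \<subseteq> pp Y" by (intro perp_anti)
    then show ?thesis using that by simp
  qed
  have l': "pp (\<Union>F) \<subseteq> Y" if "Y \<in> carrier LZ6" "\<forall>X. X \<in> F \<and> X \<in> carrier LZ6 \<longrightarrow> X \<subseteq> Y" for Y
    using l that assms by blast
  show ?thesis unfolding least_def Upper_def using c u l' assms by auto
qed

lemma greatest_LZ6_inf: assumes "F \<subseteq> carrier LZ6" shows "greatest LZ6 (\<Inter>F) (Lower LZ6 F)"
proof -
  have "pp (\<Inter>F) \<subseteq> X" if "X \<in> F" for X
  proof -
    have "\<Inter>F \<subseteq> X" using that by blast
    then have "pp (\<Inter>F) \<subseteq> pp X" by (intro perp_anti)
    moreover have "pp X = X" using that assms by auto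
    ultimately show ?thesis by simp
  qed
  then have "pp (\<Inter>F) \<subseteq> \<Inter>F" by blast
  then have e: "pp (\<Inter>F) = \<Inter>F" using perp_ext[of "\<Inter>F"] by (rule subset_antisym)
  have lo: "\<Inter>F \<in> Lower LZ6 F" unfolding Lower_def
  proof (intro IntI CollectI allI impI)
    fix x assume "x \<in> F \<inter> carrier LZ6" then show "\<Inter>F \<sqsubseteq>\<^bsub>LZ6\<^esub> x" by auto
  next
    show "\<Inter>F \<in> carrier LZ6" using e by simp
  qed
  have gr: "Y \<subseteq> \<Inter>F" if "Y \<in> Lower LZ6 F" for Y
  proof -
    have "\<forall>x. x \<in> F \<inter> carrier LZ6 \<longrightarrow> Y \<sqsubseteq>\<^bsub>LZ6\<^esub> x" using that unfolding Lower_def by simp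
    then have "\<forall>x\<in>F. Y \<subseteq> x" using assms by auto
    then show ?thesis by blast
  qed
  have sub: "Lower LZ6 F \<subseteq> carrier LZ6" unfolding Lower_def by (rule Int_lower2)
  show ?thesis unfolding greatest_def using lo gr sub by simp
qed

lemma sup_LZ6: assumes "F \<subseteq> carrier LZ6" shows "\<Squnion>\<^bsub>LZ6\<^esub>F = pp (\<Union>F)"
proof -
  note h = least_LZ6_sup[OF assms]
  show ?thesis unfolding Lattice.sup_def
    by (rule some_equality, rule h) (rule partial_order.least_unique[OF LZ6_po _ h])
qed
lemma inf_LZ6: assumes "F \<subseteq> carrier LZ6" shows "\<Sqinter>\<^bsub>LZ6\<^esub>F = \<Inter>F"
proof -
  note h = greatest_LZ6_inf[OF assms]
  show ?thesis unfolding Lattice.inf_def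
    by (rule some_equality, rule h) (rule partial_order.greatest_unique[OF LZ6_po _ h])
qed
lemma complete: "complete_lattice LZ6"
  apply (rule partial_order.complete_latticeI[OF LZ6_po])
  subgoal for A using least_LZ6_sup[of A] by blast
  subgoal for A using greatest_LZ6_inf[of A] by blast
  done
lemma least_empty: "least LZ6 {} (carrier LZ6)"
  by (simp add: least_def perp_empty perp_UNIV)
lemma greatest_UNIV: "greatest LZ6 UNIV (carrier LZ6)"
  by (simp add: greatest_def perp_empty perp_UNIV)
lemma bot_LZ6: "\<bottom>\<^bsub>LZ6\<^esub> = {}"
  unfolding Order.bottom_def
  by (rule some_equality, rule least_empty) (rule partial_order.least_unique[OF LZ6_po _ least_empty])
lemma top_LZ6: "\<top>\<^bsub>LZ6\<^esub> = UNIV"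
  unfolding Order.top_def
  by (rule some_equality, rule greatest_UNIV) (rule partial_order.greatest_unique[OF LZ6_po _ greatest_UNIV])

lemma closed_prime: "primeZ6 n \<in> carrier LZ6"
  using perp3[of "{n}"] by (simp add: perp_single)
lemma prime_ne_UNIV: "primeZ6 n \<noteq> UNIV"
proof
  assume "primeZ6 n = UNIV"
  then have "n \<in> primeZ6 n" by simp
  then show False using orth_irr[of n] by (simp add: orthZ6_def)
qed
lemma closed_single: "{n} \<in> carrier LZ6" by (simp add: pp_single)

lemma closed_sub_prime:
  assumes "x \<in> carrier LZ6" "x \<noteq> UNIV" shows "\<exists>m. x \<subseteq> primeZ6 m"
proof -
  have e: "pp x = x" using assms by simp
  have "perpZ6 x \<noteq> {}"
  proof
    assume "perpZ6 x = {}"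
    then have "pp x = UNIV" by (simp add: perp_empty)
    then show False using e assms by simp
  qed
  then obtain b where b: "b \<in> perpZ6 x" by blast
  have "pp x \<subseteq> perpZ6 {b}" using b by (intro perp_anti) simp
  then have "x \<subseteq> primeZ6 b" using e by (simp add: perp_single)
  then show ?thesis by blast
qed

lemma atoms_LZ6: "atoms LZ6 = range (\<lambda>n. {n})"
proof
  show "atoms LZ6 \<subseteq> range (\<lambda>n. {n})"
  proof
    fix p assume p: "p \<in> atoms LZ6"
    then have pc: "p \<in> carrier LZ6" and pne: "p \<noteq> {}"
      and pa: "\<forall>b\<in>carrier LZ6. b \<subseteq> p \<longrightarrow> b = {} \<or> b = p"
      unfolding atoms_def by (simp_all add: bot_LZ6)
    obtain n where n: "n \<in> p" using pne by blast
    have "{n} = {} \<or> {n} = p" using pa closed_single[of n] n by blast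
    then have "p = {n}" by auto
    then show "p \<in> range (\<lambda>n. {n})" by blast
  qed
next
  show "range (\<lambda>n. {n}) \<subseteq> atoms LZ6"
  proof
    fix p assume "p \<in> range (\<lambda>n. {n :: 6})"
    then obtain n where "p = {n}" by blast
    then show "p \<in> atoms LZ6" unfolding atoms_def using closed_single[of n]
      by (auto simp: bot_LZ6 subset_singleton_iff)
  qed
qed

lemma coatoms_LZ6: "coatoms LZ6 = range primeZ6"
proof
  show "coatoms LZ6 \<subseteq> range primeZ6"
  proof
    fix x assume x: "x \<in> coatoms LZ6"
    then have xc: "x \<in> carrier LZ6" and xne: "x \<noteq> UNIV"
      and xa: "\<forall>b\<in>carrier LZ6. x \<subseteq> b \<longrightarrow> b = UNIV \<or> b = x"
      unfolding coatoms_def by (simp_all add: top_LZ6)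
    obtain m where m: "x \<subseteq> primeZ6 m" using closed_sub_prime[OF xc xne] by blast
    have "primeZ6 m = x" using xa closed_prime[of m] m prime_ne_UNIV[of m] by blast
    then show "x \<in> range primeZ6" by blast
  qed
next
  show "range primeZ6 \<subseteq> coatoms LZ6"
  proof
    fix x assume "x \<in> range primeZ6"
    then obtain n where xn: "x = primeZ6 n" by blast
    have "b = UNIV \<or> b = x" if bc: "b \<in> carrier LZ6" and xb: "x \<subseteq> b" for b
    proof (cases "b = UNIV")
      case False
      obtain m where bm: "b \<subseteq> primeZ6 m" using closed_sub_prime[OF bc False] by blast
      then have "n = m" using xb xn prime_inj by blast
      then show ?thesis using xb xn bm by blast
    qed simp
    then show "x \<in> coatoms LZ6" unfolding coatoms_def
      using closed_prime[of n] prime_ne_UNIV[of n] xn by (simp add: top_LZ6)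
  qed
qed

lemma atoms_below_LZ6: "atoms_below LZ6 a = (\<lambda>n. {n}) ` a"
  unfolding atoms_below_def atoms_LZ6 by auto

lemma atomistic: "atomistic LZ6"
  unfolding atomistic_def
proof
  fix a assume a: "a \<in> carrier LZ6"
  have sub: "atoms_below LZ6 a \<subseteq> carrier LZ6"
    unfolding atoms_below_LZ6 using closed_single by blast
  have "\<Union>(atoms_below LZ6 a) = a" unfolding atoms_below_LZ6 by auto
  then show "a = \<Squnion>\<^bsub>LZ6\<^esub>(atoms_below LZ6 a)" using sup_LZ6[OF sub] a by simp
qed

lemma perp_Un: "perpZ6 (A \<union> B) = perpZ6 A \<inter> perpZ6 B" by (auto simp: perpZ6_def)

lemma ortho: "orthocomplemented LZ6"
  unfolding orthocomplemented_def
proof (intro exI[of _ perpZ6] conjI ballI impI)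
  fix a assume a: "a \<in> carrier LZ6"
  show "perpZ6 a \<in> carrier LZ6" by (simp add: perp3)
  show "perpZ6 (perpZ6 a) = a" using a by simp
  have s: "{a, perpZ6 a} \<subseteq> carrier LZ6" using a by (simp add: perp3)
  have "a \<inter> perpZ6 a = {}" using orth_irr by (auto simp: perpZ6_def)
  then show "a \<sqinter>\<^bsub>LZ6\<^esub> perpZ6 a = \<bottom>\<^bsub>LZ6\<^esub>"
    unfolding Lattice.meet_def inf_LZ6[OF s] bot_LZ6 by simp
  have "perpZ6 (a \<union> perpZ6 a) = {}" unfolding perp_Un using a orth_irr
    by (auto simp: perpZ6_def)
  then show "a \<squnion>\<^bsub>LZ6\<^esub> perpZ6 a = \<top>\<^bsub>LZ6\<^esub>"
    unfolding Lattice.join_def sup_LZ6[OF s] top_LZ6 by (simp add: perp_empty)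
next
  fix a b assume "a \<in> carrier LZ6" "b \<in> carrier LZ6" "a \<sqsubseteq>\<^bsub>LZ6\<^esub> b"
  then show "perpZ6 b \<sqsubseteq>\<^bsub>LZ6\<^esub> perpZ6 a" by (simp add: perp_anti)
qed

lemma simple_cl: "simple_closure_space UNIV (\<lambda>A. perpZ6 (perpZ6 A))"
  unfolding simple_closure_space_def
  by (auto simp: perp3 perp_anti perp_ext pp_single perp_empty perp_UNIV)

lemma set6_eq: "(A::6 set) = B \<longleftrightarrow> (\<forall>x. x \<in> A \<longleftrightarrow> x \<in> B)" by blast

lemma prime04: "primeZ6 4 = {0,1,2}" "primeZ6 1 = {3,4,5}" "primeZ6 0 = {2,3,4}" "primeZ6 3 = {5,0,1}"
  unfolding set6_eq primeZ6_def all6 by simp_all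

lemma prime03_UNIV: "primeZ6 0 \<union> primeZ6 3 = UNIV"
  by (simp add: prime04 UNIV6 insert_commute)

lemma atom_pairs_circ:
  assumes nf: "R \<noteq> UNIV"
    and col: "\<forall>b. {a. (a, b) \<in> R} \<in> range primeZ6 \<union> {UNIV}"
    and row: "\<forall>a. {b. (a, b) \<in> R} \<in> range primeZ6 \<union> {UNIV}"
  shows "atom_pairs R \<in> sigma_circledast LZ6 LZ6"
proof -
  let ?s = "\<lambda>n::6. {n}"
  have ap: "atom_pairs R = (\<lambda>(p, q). (?s p, ?s q)) ` R" by (simp add: atom_pairs_def)
  have mem: "(?s a, ?s b) \<in> atom_pairs R \<longleftrightarrow> (a, b) \<in> R" for a b
    unfolding ap by auto
  obtain a0 b0 where ab0: "(a0, b0) \<notin> R" using nf by auto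
  have sub: "atom_pairs R \<subset> atoms LZ6 \<times> atoms LZ6"
  proof
    show "atom_pairs R \<subseteq> atoms LZ6 \<times> atoms LZ6" unfolding ap atoms_LZ6 by auto
    have "(?s a0, ?s b0) \<in> atoms LZ6 \<times> atoms LZ6" unfolding atoms_LZ6 by simp
    then show "atom_pairs R \<noteq> atoms LZ6 \<times> atoms LZ6"
      using mem[of a0 b0] ab0 by metis
  qed
  have cl: "Cl LZ6 (coatoms LZ6 \<union> {\<top>\<^bsub>LZ6\<^esub>}) = (\<lambda>X. ?s ` X) ` (range primeZ6 \<union> {UNIV})"
    unfolding Cl_def coatoms_LZ6 top_LZ6 atoms_below_LZ6 by simp
  have c1: "{q1. (q1, p2) \<in> atom_pairs R} \<in> Cl LZ6 (coatoms LZ6 \<union> {\<top>\<^bsub>LZ6\<^esub>})"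
    if p2a: "p2 \<in> atoms LZ6" for p2
  proof -
    obtain b where b: "p2 = ?s b" using p2a unfolding atoms_LZ6 by blast
    have "{q1. (q1, p2) \<in> atom_pairs R} = ?s ` {a. (a, b) \<in> R}"
      unfolding ap b by auto
    moreover have "{a. (a, b) \<in> R} \<in> range primeZ6 \<union> {UNIV}" using col by blast
    ultimately show ?thesis unfolding cl by (rule image_eqI)
  qed
  have c2: "{q2. (p1, q2) \<in> atom_pairs R} \<in> Cl LZ6 (coatoms LZ6 \<union> {\<top>\<^bsub>LZ6\<^esub>})"
    if p1a: "p1 \<in> atoms LZ6" for p1
  proof -
    obtain a where a: "p1 = ?s a" using p1a unfolding atoms_LZ6 by blast
    have "{q2. (p1, q2) \<in> atom_pairs R} = ?s ` {b. (a, b) \<in> R}"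
      unfolding ap a by auto
    moreover have "{b. (a, b) \<in> R} \<in> range primeZ6 \<union> {UNIV}" using row by blast
    ultimately show ?thesis unfolding cl by (rule image_eqI)
  qed
  show ?thesis unfolding sigma_circledast_def mem_Collect_eq using sub c1 c2 by simp
qed

lemma R_col: "\<forall>b. {a. (a, b) \<in> RZ6} \<in> range primeZ6 \<union> {UNIV}"
proof
  fix b :: 6
  have "{a. (a, b) \<in> RZ6} = (if b \<in> {0,1,2} then primeZ6 4 else primeZ6 1)"
    unfolding set6_eq prime04 RZ6_def using x6[of b] by (simp add: all6) blast
  then show "{a. (a, b) \<in> RZ6} \<in> range primeZ6 \<union> {UNIV}" by (simp split: if_splits)
qed
lemma R_row: "\<forall>a. {b. (a, b) \<in> RZ6} \<in> range primeZ6 \<union> {UNIV}"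
proof
  fix a :: 6
  have "{b. (a, b) \<in> RZ6} = (if a \<in> {0,1,2} then primeZ6 4 else primeZ6 1)"
    unfolding set6_eq prime04 RZ6_def using x6[of a] by (simp add: all6) blast
  then show "{b. (a, b) \<in> RZ6} \<in> range primeZ6 \<union> {UNIV}" by (simp split: if_splits)
qed
lemma S_col: "\<forall>b. {a. (a, b) \<in> SZ6} \<in> range primeZ6 \<union> {UNIV}"
proof
  fix b :: 6
  have "{a. (a, b) \<in> SZ6} = (if b \<in> primeZ6 1 then UNIV else primeZ6 4)"
    unfolding SZ6_def by auto
  then show "{a. (a, b) \<in> SZ6} \<in> range primeZ6 \<union> {UNIV}" by (simp split: if_splits)
qed
lemma S_row: "\<forall>a. {b. (a, b) \<in> SZ6} \<in> range primeZ6 \<union> {UNIV}"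
proof
  fix a :: 6
  have "{b. (a, b) \<in> SZ6} = (if a \<in> primeZ6 4 then UNIV else primeZ6 1)"
    unfolding SZ6_def by auto
  then show "{b. (a, b) \<in> SZ6} \<in> range primeZ6 \<union> {UNIV}" by (simp split: if_splits)
qed

lemma RS: "RZ6 \<subset> SZ6" 
proof
  show "RZ6 \<subseteq> SZ6" unfolding RZ6_def SZ6_def prime04 by auto
  have "(0, 3) \<in> SZ6" unfolding SZ6_def prime04 by simp
  moreover have "(0, 3) \<notin> RZ6" unfolding RZ6_def by simp
  ultimately show "RZ6 \<noteq> SZ6" by blast
qed
lemma S03: "(3, 0) \<notin> SZ6" unfolding SZ6_def prime04 by simp
lemma SU: "SZ6 \<subset> UNIV" using S03 by blast

lemma R_circ: "atom_pairs RZ6 \<in> sigma_circledast LZ6 LZ6"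
  using atom_pairs_circ[OF _ R_col R_row] RS SU by blast
lemma S_circ: "atom_pairs SZ6 \<in> sigma_circledast LZ6 LZ6"
  using atom_pairs_circ[OF _ S_col S_row] SU by blast

lemma no_iso_general:
  fixes L0 :: "'d gorder" and B :: "('b, 'y) chu"
  assumes cl: "complete_lattice L0" and at: "atomistic L0"
    and iso: "chu_iso (chu_F L0) B"
    and sR: "sR \<in> states B" and sS: "sS \<in> states B"
    and RS: "{p \<in> pts B. \<not> rel B p sR} \<subset> {p \<in> pts B. \<not> rel B p sS}"
    and SB: "{p \<in> pts B. \<not> rel B p sS} \<subset> pts B"
  shows False
proof -
  interpret L0: complete_lattice L0 by (rule cl)
  let ?A = "chu_F L0"
  obtain f g f' g' where ar: "chu_arrow ?A B (f, g)" and ar': "chu_arrow B ?A (f', g')"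
    and inv1: "\<forall>b\<in>pts B. f (f' b) = b"
    using iso unfolding chu_iso_def by blast
  have fmap: "f a \<in> pts B" if "a \<in> pts ?A" for a
    using ar that unfolding chu_arrow_def by auto
  have f'map: "f' b \<in> pts ?A" if "b \<in> pts B" for b
    using ar' that unfolding chu_arrow_def by auto
  have gmap: "g s \<in> states ?A" if "s \<in> states B" for s
    using ar that unfolding chu_arrow_def by auto
  have relc: "rel B (f a) s = rel ?A a (g s)" if "a \<in> pts ?A" "s \<in> states B" for a s
    using ar that unfolding chu_arrow_def by auto
  have ptsA: "pts ?A = atoms L0 \<union> {\<bottom>\<^bsub>L0\<^esub>}" and statesA: "states ?A = coatoms L0 \<union> {\<top>\<^bsub>L0\<^esub>}"
    and relA: "\<And>p x. rel ?A p x = (\<not> p \<sqsubseteq>\<^bsub>L0\<^esub> x)"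
    by (simp_all add: chu_F_def)
  have ptsC: "pts ?A \<subseteq> carrier L0" unfolding ptsA atoms_def by auto
  define x where "x = g sR"
  define y where "y = g sS"
  have xs: "x \<in> states ?A" using gmap sR x_def by simp
  have ys: "y \<in> states ?A" using gmap sS y_def by simp
  have i: "a \<sqsubseteq>\<^bsub>L0\<^esub> y" if "a \<in> pts ?A" "a \<sqsubseteq>\<^bsub>L0\<^esub> x" for a
  proof -
    have "\<not> rel B (f a) sR" using relc[OF that(1) sR] that(2) relA x_def by simp
    then have "f a \<in> {p \<in> pts B. \<not> rel B p sS}" using RS fmap[OF that(1)] by blast
    then show ?thesis using relc[OF that(1) sS] relA y_def by simp
  qed
  obtain b where b: "b \<in> pts B" "\<not> rel B b sS" "rel B b sR" using RS by blast
  have ii1: "f' b \<in> pts ?A" using f'map b(1) .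
  have ii2: "f' b \<sqsubseteq>\<^bsub>L0\<^esub> y" using relc[OF ii1 sS] inv1 b relA y_def by simp
  have ii3: "\<not> f' b \<sqsubseteq>\<^bsub>L0\<^esub> x" using relc[OF ii1 sR] inv1 b relA x_def by simp
  obtain c where c: "c \<in> pts B" "rel B c sS" using SB by blast
  have iii1: "f' c \<in> pts ?A" using f'map c(1) .
  have iii2: "\<not> f' c \<sqsubseteq>\<^bsub>L0\<^esub> y" using relc[OF iii1 sS] inv1 c relA y_def by simp
  have ytop: "y \<noteq> \<top>\<^bsub>L0\<^esub>" using iii2 iii1 ptsC L0.top_higher by blast
  have xtop: "x \<noteq> \<top>\<^bsub>L0\<^esub>" using ii3 ii1 ptsC L0.top_higher by blast
  have yco: "y \<in> coatoms L0" using ys ytop statesA by simp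
  have xco: "x \<in> coatoms L0" using xs xtop statesA by simp
  have xc: "x \<in> carrier L0" and yc: "y \<in> carrier L0" using xco yco unfolding coatoms_def by auto
  have ab: "atoms_below L0 x \<subseteq> carrier L0" unfolding atoms_below_def atoms_def by auto
  have "\<Squnion>\<^bsub>L0\<^esub>(atoms_below L0 x) \<sqsubseteq>\<^bsub>L0\<^esub> y"
  proof (rule L0.sup_least[OF ab yc])
    fix a assume "a \<in> atoms_below L0 x"
    then have "a \<in> pts ?A" "a \<sqsubseteq>\<^bsub>L0\<^esub> x" unfolding atoms_below_def ptsA by auto
    then show "a \<sqsubseteq>\<^bsub>L0\<^esub> y" by (rule i)
  qed
  then have xy: "x \<sqsubseteq>\<^bsub>L0\<^esub> y" using at xc unfolding atomistic_def by metis
  have "y = \<top>\<^bsub>L0\<^esub> \<or> y = x" using xco yc xy unfolding coatoms_def by blast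
  then have "y = x" using ytop by blast
  then show False using ii2 ii3 by simp
qed

abbreviation "A1 \<equiv> chu_F LZ6"
abbreviation "T6 \<equiv> chu_tensor A1 A1"

lemma A1_simps: "pts A1 = range (\<lambda>n. {n}) \<union> {{}}" "pt0 A1 = {}"
  "states A1 = range primeZ6 \<union> {UNIV}" "st0 A1 = UNIV" "rel A1 = (\<lambda>p x. \<not> p \<subseteq> x)"
  by (simp_all add: chu_F_def atoms_LZ6 coatoms_LZ6 bot_LZ6 top_LZ6)

definition stQ :: "(6 \<times> 6) set \<Rightarrow> (6 set \<Rightarrow> 6 set) \<times> (6 set \<Rightarrow> 6 set)" where
  "stQ Q = (\<lambda>a\<in>pts A1. if a = {} then UNIV else {b. (the_elem a, b) \<in> Q},
            \<lambda>y\<in>pts A1. if y = {} then UNIV else {a. (a, the_elem y) \<in> Q})"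

lemma stQ_state:
  assumes col: "\<forall>b. {a. (a, b) \<in> Q} \<in> range primeZ6 \<union> {UNIV}"
    and row: "\<forall>a. {b. (a, b) \<in> Q} \<in> range primeZ6 \<union> {UNIV}"
  shows "stQ Q \<in> states T6"
proof -
  let ?f = "\<lambda>a\<in>pts A1. if a = {} then UNIV else {b. (the_elem a, b) \<in> Q}"
  let ?g = "\<lambda>y\<in>pts A1. if y = {} then UNIV else {a. (a, the_elem y) \<in> Q}"
  have f1: "?f \<in> pts A1 \<rightarrow>\<^sub>E states A1"
    unfolding restrict_PiE_iff A1_simps using row by auto
  have g1: "?g \<in> pts A1 \<rightarrow>\<^sub>E states A1"
    unfolding restrict_PiE_iff A1_simps using col by auto
  have r: "(\<not> y \<subseteq> ?f a) = (\<not> a \<subseteq> ?g y)" if "a \<in> pts A1" "y \<in> pts A1" for a y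
    using that unfolding A1_simps by auto
  have "chu_arrow A1 (chu_perp A1) (?f, ?g)"
    unfolding chu_arrow_def chu_perp_def using f1 g1 r
    by (simp add: A1_simps)
  then show ?thesis unfolding stQ_def chu_tensor_def by simp
qed

lemma pts_T6: "pts T6 = {None} \<union> (\<lambda>(a, b). Some ({a}, {b})) ` UNIV"
  unfolding chu_tensor_def smash_def by (auto simp: A1_simps)

lemma rel_T6_None: "\<not> rel T6 None s" by (simp add: chu_tensor_def)

lemma rel_T6_Some: "rel T6 (Some ({a}, {b})) (stQ Q) \<longleftrightarrow> (a, b) \<notin> Q"
  by (simp add: chu_tensor_def stQ_def A1_simps)

lemma no_iso:
  fixes L0 :: "'d gorder"
  assumes "complete_lattice L0" "atomistic L0" "chu_iso (chu_F L0) T6"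
  shows False
proof (rule no_iso_general[OF assms stQ_state[OF R_col R_row] stQ_state[OF S_col S_row]])
  let ?Z = "\<lambda>Q. {p \<in> pts T6. \<not> rel T6 p (stQ Q)}"
  have s03: "Some ({0::6}, {3::6}) \<in> pts T6" "Some ({3::6}, {0::6}) \<in> pts T6" unfolding pts_T6 by auto
  have sub: "?Z RZ6 \<subseteq> ?Z SZ6"
  proof
    fix p assume p: "p \<in> ?Z RZ6"
    then have pp: "p \<in> pts T6" by blast
    show "p \<in> ?Z SZ6"
    proof (cases "p = None")
      case True then show ?thesis using pp rel_T6_None by blast
    next
      case False
      then obtain a b where ab: "p = Some ({a}, {b})" using pp unfolding pts_T6 by auto
      then have "(a, b) \<in> RZ6" using p rel_T6_Some by blast
      then have "(a, b) \<in> SZ6" using RS by blast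
      then show ?thesis using pp ab rel_T6_Some by blast
    qed
  qed
  have "(0, 3) \<in> SZ6" unfolding SZ6_def prime04 by simp
  moreover have "(0, 3) \<notin> RZ6" unfolding RZ6_def by simp
  ultimately have "Some ({0::6}, {3::6}) \<in> ?Z SZ6 - ?Z RZ6" using s03 rel_T6_Some by blast
  then show "?Z RZ6 \<subset> ?Z SZ6" using sub by blast
  have "Some ({3::6}, {0::6}) \<notin> ?Z SZ6" using S03 rel_T6_Some by blast
  then show "?Z SZ6 \<subset> pts T6" using s03 by blast
qed

lemma prod_le: "le (prod_gorder L1 L2) p q = (le L1 (fst p) (fst q) \<and> le L2 (snd p) (snd q))"
  by (simp add: prod_gorder_def case_prod_beta)
lemma prod_carrier: "carrier (prod_gorder L1 L2) = carrier L1 \<times> carrier L2"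
  by (simp add: prod_gorder_def)

lemma closed_mid_aux: "\<forall>n::6. n + 1 \<in> pp {n, n + 2}"
  unfolding perpZ6_def orthZ6_def primeZ6_def by (simp add: all6)

lemma closed_mid: assumes "X \<in> carrier LZ6" "n \<in> X" "n + 2 \<in> X" shows "n + 1 \<in> X"
proof -
  have "pp {n, n + 2} \<subseteq> pp X" using assms(2,3) by (intro perp_anti) auto
  then show ?thesis using closed_mid_aux assms(1) by auto
qed

lemma six_neq: "(n::6) + 1 \<noteq> n" "(n::6) + 1 \<noteq> n + 2"
  using x6[of n] by auto

context
  fixes L1 :: "'b gorder" and L2 :: "'c gorder" and f :: "6 set \<Rightarrow> 'b \<times> 'c"
  assumes po1: "partial_order L1" and po2: "partial_order L2"
    and ne1: "carrier L1 \<noteq> {}" and ne2: "carrier L2 \<noteq> {}"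
    and iso: "order_iso LZ6 (prod_gorder L1 L2) f"
begin

lemma f_in: "X \<in> carrier LZ6 \<Longrightarrow> f X \<in> carrier L1 \<times> carrier L2"
  using iso unfolding order_iso_def bij_betw_def prod_carrier by blast

lemma f_surj: assumes "p \<in> carrier L1 \<times> carrier L2" shows "\<exists>X\<in>carrier LZ6. f X = p"
proof -
  have "f ` carrier LZ6 = carrier L1 \<times> carrier L2"
    using iso unfolding order_iso_def bij_betw_def prod_carrier by blast
  then have "p \<in> f ` carrier LZ6" using assms by simp
  then obtain X where "X \<in> carrier LZ6" "p = f X" by (rule imageE)
  then show ?thesis by blast
qed

lemma f_inj: "X \<in> carrier LZ6 \<Longrightarrow> Y \<in> carrier LZ6 \<Longrightarrow> f X = f Y \<Longrightarrow> X = Y"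
  using iso unfolding order_iso_def bij_betw_def inj_on_def by blast

lemma f_ord: "X \<in> carrier LZ6 \<Longrightarrow> Y \<in> carrier LZ6 \<Longrightarrow>
   X \<subseteq> Y \<longleftrightarrow> (le L1 (fst (f X)) (fst (f Y)) \<and> le L2 (snd (f X)) (snd (f Y)))"
  using iso unfolding order_iso_def prod_le by simp

lemma empty_c: "{} \<in> carrier LZ6" using least_empty unfolding least_def by blast
lemma UNIV_c: "UNIV \<in> carrier LZ6" using greatest_UNIV unfolding greatest_def by blast

abbreviation "lo1 \<equiv> fst (f {})"
abbreviation "lo2 \<equiv> snd (f {})"

lemma b_in: "lo1 \<in> carrier L1" "lo2 \<in> carrier L2"
  using f_in[OF empty_c] by auto

lemma lo1_le: assumes "x \<in> carrier L1" shows "le L1 lo1 x"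
proof -
  obtain y where y: "y \<in> carrier L2" using ne2 by blast
  obtain X where X: "X \<in> carrier LZ6" "f X = (x, y)" using f_surj[of "(x, y)"] assms y by blast
  show ?thesis using f_ord[OF empty_c X(1)] X(2) by simp
qed

lemma lo2_le: assumes "y \<in> carrier L2" shows "le L2 lo2 y"
proof -
  obtain x where x: "x \<in> carrier L1" using ne1 by blast
  obtain X where X: "X \<in> carrier LZ6" "f X = (x, y)" using f_surj[of "(x, y)"] assms x by blast
  show ?thesis using f_ord[OF empty_c X(1)] X(2) by simp
qed

lemma atom_side: "fst (f {n}) = lo1 \<or> snd (f {n}) = lo2"
proof -
  obtain x y where xy: "f {n} = (x, y)" by fastforce
  have xc: "x \<in> carrier L1" and yc: "y \<in> carrier L2" using f_in[OF closed_single[of n]] xy by auto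
  obtain Y where Y: "Y \<in> carrier LZ6" "f Y = (x, lo2)" using f_surj[of "(x, lo2)"] xc b_in by blast
  interpret p1: partial_order L1 by (rule po1)
  have "le L1 x x" using xc by (rule p1.le_refl)
  moreover have "le L2 lo2 y" using lo2_le[OF yc] .
  ultimately have "Y \<subseteq> {n}" using f_ord[OF Y(1) closed_single[of n]] Y(2) xy by simp
  then have "Y = {} \<or> Y = {n}" by blast
  then show ?thesis
  proof
    assume "Y = {}" then have "(x, lo2) = f {}" using Y by simp
    then show ?thesis using xy by (metis fst_conv)
  next
    assume "Y = {n}" then show ?thesis using Y xy by simp
  qed
qed

lemma not_both: "\<not> (fst (f {n}) = lo1 \<and> snd (f {n}) = lo2)"
proof
  assume "fst (f {n}) = lo1 \<and> snd (f {n}) = lo2"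
  then have "f {n} = f {}" by (simp add: prod_eq_iff)
  then show False using f_inj[OF closed_single empty_c] by blast
qed


lemma atom_in: "f {n} \<in> carrier L1 \<times> carrier L2" using f_in[OF closed_single] .

lemma step2: assumes "snd (f {n}) = lo2" shows "snd (f {n + 2}) = lo2"
proof (rule ccontr)
  interpret p1: partial_order L1 by (rule po1)
  interpret p2: partial_order L2 by (rule po2)
  assume a: "snd (f {n + 2}) \<noteq> lo2"
  then have a1: "fst (f {n + 2}) = lo1" using atom_side[of "n + 2"] by blast
  define p where "p = fst (f {n})"
  define q where "q = snd (f {n + 2})"
  have pc: "p \<in> carrier L1" using atom_in[of n] p_def by auto
  have qc: "q \<in> carrier L2" using atom_in[of "n + 2"] q_def by auto
  obtain X where X: "X \<in> carrier LZ6" "f X = (p, q)" using f_surj[of "(p, q)"] pc qc by blast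
  have "{n} \<subseteq> X" using f_ord[OF closed_single X(1)] X(2) assms p_def pc lo2_le[OF qc] by simp
  moreover have "{n + 2} \<subseteq> X" using f_ord[OF closed_single X(1)] X(2) a1 q_def qc lo1_le[OF pc] by simp
  ultimately have "n + 1 \<in> X" using closed_mid[OF X(1)] by blast
  then have le: "le L1 (fst (f {n + 1})) p \<and> le L2 (snd (f {n + 1})) q"
    using f_ord[OF closed_single X(1), of "n + 1"] X(2) by simp
  have c1: "fst (f {n + 1}) \<in> carrier L1" "snd (f {n + 1}) \<in> carrier L2" using atom_in[of "n + 1"] by auto
  show False using atom_side[of "n + 1"]
  proof
    assume s: "snd (f {n + 1}) = lo2"
    have "{n + 1} \<subseteq> {n}" using f_ord[OF closed_single closed_single, of "n + 1" n] le s assms p_def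
      b_in p2.le_refl by simp
    then show False using six_neq by simp
  next
    assume s: "fst (f {n + 1}) = lo1"
    have "{n + 1} \<subseteq> {n + 2}" using f_ord[OF closed_single closed_single, of "n + 1" "n + 2"] le s a1 q_def
      b_in p1.le_refl by simp
    then show False using six_neq by simp
  qed
qed

lemma step1: assumes "snd (f {n}) = lo2" shows "snd (f {n + 1}) = lo2"
proof -
  interpret p1: partial_order L1 by (rule po1)
  interpret p2: partial_order L2 by (rule po2)
  have a2: "snd (f {n + 2}) = lo2" using step2[OF assms] .
  define u where "u = fst (f UNIV)"
  have uc: "u \<in> carrier L1" using f_in[OF UNIV_c] u_def by auto
  obtain Y where Y: "Y \<in> carrier LZ6" "f Y = (u, lo2)" using f_surj[of "(u, lo2)"] uc b_in by blast
  have "le L1 (fst (f {n})) u" using f_ord[OF closed_single UNIV_c, of n] u_def by simp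
  then have "{n} \<subseteq> Y" using f_ord[OF closed_single Y(1)] Y(2) assms b_in p2.le_refl by simp
  moreover have "le L1 (fst (f {n + 2})) u" using f_ord[OF closed_single UNIV_c, of "n + 2"] u_def by simp
  then have "{n + 2} \<subseteq> Y" using f_ord[OF closed_single Y(1)] Y(2) a2 b_in p2.le_refl by simp
  ultimately have "n + 1 \<in> Y" using closed_mid[OF Y(1)] by blast
  then have "le L2 (snd (f {n + 1})) lo2" using f_ord[OF closed_single Y(1), of "n + 1"] Y(2) by simp
  moreover have "le L2 lo2 (snd (f {n + 1}))" using lo2_le atom_in[of "n + 1"] by auto
  ultimately show ?thesis using p2.le_antisym b_in atom_in[of "n + 1"] by auto
qed

lemma all_snd: assumes "snd (f {0}) = lo2" shows "snd (f {n}) = lo2"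
proof -
  have "snd (f {1}) = lo2" using step1[of 0] assms by simp
  moreover have "snd (f {2}) = lo2" using step1[of 1] calculation by simp
  moreover have "snd (f {3}) = lo2" using step1[of 2] calculation by simp
  moreover have "snd (f {4}) = lo2" using step1[of 3] calculation by simp
  moreover have "snd (f {5}) = lo2" using step1[of 4] calculation by simp
  ultimately show ?thesis using assms x6[of n] by auto
qed

lemma side_false: assumes "snd (f {0}) = lo2" and nt: "\<exists>x\<in>carrier L2. \<exists>y\<in>carrier L2. x \<noteq> y"
  shows False
proof -
  interpret p1: partial_order L1 by (rule po1)
  obtain c where c: "c \<in> carrier L2" "c \<noteq> lo2" using nt by blast
  obtain X where X: "X \<in> carrier LZ6" "f X = (lo1, c)" using f_surj[of "(lo1, c)"] c b_in by blast
  have "X \<noteq> {}" using X c by (metis snd_conv)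
  then obtain n where n: "n \<in> X" by blast
  then have "le L1 (fst (f {n})) lo1" using f_ord[OF closed_single X(1), of n] X(2) by simp
  then have "fst (f {n}) = lo1" using p1.le_antisym lo1_le b_in atom_in[of n] by auto
  then show False using not_both[of n] all_snd[OF assms(1)] by blast
qed

end

lemma swap_iso:
  assumes "order_iso LZ6 (prod_gorder L1 L2) f"
  shows "order_iso LZ6 (prod_gorder L2 L1) (\<lambda>X. prod.swap (f X))"
proof -
  have b: "bij_betw f (carrier LZ6) (carrier L1 \<times> carrier L2)"
    using assms unfolding order_iso_def prod_carrier by blast
  have "bij_betw prod.swap (carrier L1 \<times> carrier L2) (carrier L2 \<times> carrier L1)"
    by (rule bij_betwI[of _ _ _ prod.swap]) auto
  then have "bij_betw (prod.swap \<circ> f) (carrier LZ6) (carrier L2 \<times> carrier L1)"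
    using b bij_betw_trans by blast
  then have "bij_betw (\<lambda>X. prod.swap (f X)) (carrier LZ6) (carrier (prod_gorder L2 L1))"
    by (simp add: comp_def prod_carrier)
  moreover have "\<forall>x\<in>carrier LZ6. \<forall>y\<in>carrier LZ6. x \<sqsubseteq>\<^bsub>LZ6\<^esub> y \<longleftrightarrow>
      prod.swap (f x) \<sqsubseteq>\<^bsub>prod_gorder L2 L1\<^esub> prod.swap (f y)"
    using assms unfolding order_iso_def prod_le by auto
  ultimately show ?thesis unfolding order_iso_def by blast
qed

lemma irreducible: "\<not> decomposes_as LZ6 (L1 :: 'b gorder) (L2 :: 'c gorder)"
proof
  assume "decomposes_as LZ6 L1 L2"
  then obtain f where n1: "nontrivial_lattice L1" and n2: "nontrivial_lattice L2"
    and iso: "order_iso LZ6 (prod_gorder L1 L2) f"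
    unfolding decomposes_as_def by blast
  have po1: "partial_order L1" using n1 unfolding nontrivial_lattice_def lattice_def upper_semilattice_def by blast
  have po2: "partial_order L2" using n2 unfolding nontrivial_lattice_def lattice_def upper_semilattice_def by blast
  have nt1: "\<exists>x\<in>carrier L1. \<exists>y\<in>carrier L1. x \<noteq> y" using n1 unfolding nontrivial_lattice_def by blast
  have nt2: "\<exists>x\<in>carrier L2. \<exists>y\<in>carrier L2. x \<noteq> y" using n2 unfolding nontrivial_lattice_def by blast
  have ne1: "carrier L1 \<noteq> {}" using nt1 by blast
  have ne2: "carrier L2 \<noteq> {}" using nt2 by blast
  have "fst (f {0}) = fst (f {}) \<or> snd (f {0}) = snd (f {})"
    by (rule atom_side[OF po1 po2 ne1 ne2 iso])
  then show False
  proof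
    assume "snd (f {0}) = snd (f {})"
    then show False using side_false[OF po1 po2 ne1 ne2 iso] nt2 by blast
  next
    assume h: "fst (f {0}) = fst (f {})"
    have iso': "order_iso LZ6 (prod_gorder L2 L1) (\<lambda>X. prod.swap (f X))" by (rule swap_iso[OF iso])
    have "snd (prod.swap (f {0})) = snd (prod.swap (f {}))"
      using h by simp
    then show False using side_false[OF po2 po1 ne2 ne1 iso'] nt1 by blast
  qed
qed

theorem mainTheorem12:
  shows "(\<forall>n m. orthZ6 n m \<longrightarrow> orthZ6 m n) \<and> (\<forall>n. \<not> orthZ6 n n) \<and>
    separating UNIV orthZ6 \<and>
    complete_lattice LZ6 \<and> atomistic LZ6 \<and> orthocomplemented LZ6 \<and>
    (\<forall>(L1 :: 'b gorder) (L2 :: 'c gorder). \<not> decomposes_as LZ6 L1 L2) \<and>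
    simple_closure_space UNIV (\<lambda>A. perpZ6 (perpZ6 A)) \<and>
    (\<exists>x\<in>coatoms LZ6. \<exists>y\<in>coatoms LZ6.
        atoms_below LZ6 x \<union> atoms_below LZ6 y = atoms LZ6) \<and>
    primeZ6 0 \<in> coatoms LZ6 \<and> primeZ6 3 \<in> coatoms LZ6 \<and> primeZ6 0 \<union> primeZ6 3 = UNIV \<and>
    atom_pairs RZ6 \<in> sigma_circledast LZ6 LZ6 \<and> atom_pairs SZ6 \<in> sigma_circledast LZ6 LZ6 \<and>
    RZ6 \<subset> SZ6 \<and> SZ6 \<subset> UNIV \<and>
    \<not> (\<exists>L0 :: 'd gorder. complete_lattice L0 \<and> atomistic L0 \<and> coatomistic L0 \<and>
          chu_iso (chu_F L0) (chu_tensor (chu_F LZ6) (chu_F LZ6)))"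
proof -
  have c0: "primeZ6 0 \<in> coatoms LZ6" and c3: "primeZ6 3 \<in> coatoms LZ6"
    unfolding coatoms_LZ6 by simp_all
  have ab: "atoms_below LZ6 (primeZ6 0) \<union> atoms_below LZ6 (primeZ6 3) = atoms LZ6"
    unfolding atoms_below_LZ6 atoms_LZ6 image_Un[symmetric] prime03_UNIV ..
  have ex: "\<exists>x\<in>coatoms LZ6. \<exists>y\<in>coatoms LZ6. atoms_below LZ6 x \<union> atoms_below LZ6 y = atoms LZ6"
    using c0 c3 ab by blast
  have ni: "\<not> (\<exists>L0 :: 'd gorder. complete_lattice L0 \<and> atomistic L0 \<and> coatomistic L0 \<and>
          chu_iso (chu_F L0) (chu_tensor (chu_F LZ6) (chu_F LZ6)))"
    using no_iso by blast
  have irr: "\<forall>(L1 :: 'b gorder) (L2 :: 'c gorder). \<not> decomposes_as LZ6 L1 L2"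
    using irreducible by blast
  show ?thesis
    using orth_sym orth_irr separating complete atomistic ortho irr simple_cl ex c0 c3
      prime03_UNIV R_circ S_circ RS SU ni by blast
qed

end
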